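(* Let $\alpha\in(0,1)$, $R_{th}>0$ and put $\varepsilon = 2^{2R_{th}/(1-\alpha)}-1$. For a link $j\in\{SR_m,\;R_mD\}$ let the IQI amplitude/phase parameters $\xi_{t_j},\xi_{r_j}>0$, $\phi_{t_j},\phi_{r_j}\in\mathbb{R}$ be given, set $\mu_{t_j}=\tfrac12(1+\xi_{t_j}e^{i\phi_{t_j}})$, $v_{t_j}=\tfrac12(1-\xi_{t_j}e^{-i\phi_{t_j}})$, $\mu_{r_j}=\tfrac12(1+\xi_{r_j}e^{-i\phi_{r_j}})$, $v_{r_j}=\tfrac12(1-\xi_{r_j}e^{i\phi_{r_j}})$, and $p_j=|\mu_{t_j}\mu_{r_j}+v_{t_j}^*v_{r_j}|^2$, $q_j=|\mu_{r_j}v_{t_j}+\mu_{t_j}^*v_{r_j}|^2$. Assume $p_j-\varepsilon q_j>0$ for both links. Let $X_{SR_m}=|\hat h_{SR_m}|^2$ and $X_{R_mD}=|\hat h_{R_mD}|^2$ be independent exponential random variables with rates $\lambda_{SR_m}>0$ and $\lambda_{R_mD}>0$ (i.e. $\Pr\{X_j>x\}=e^{-\lambda_j x}$ for $x\ge 0$), and let the channel-estimation-error variances satisfy $\sigma^2_{e_{SR_m}}=\sigma^2_{e_{R_mD}}=t>0$. Define the high-SNR capacities $$C^{\infty}_{j}=\frac{1-\alpha}{2}\log_2\!\Big(1+\frac{X_j p_j}{\sigma^2_{e_j}p_j+X_j q_j+\sigma^2_{e_j}q_j}\Big),\quad j\in\{SR_m,R_mD\}.$$ Then $$\Pr\{\min(C^\infty_{SR_m},C^\infty_{R_mD})<R_{th}\}=1-e^{-\lambda_{SR_m}H_1-\lambda_{R_mD}H_2},$$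 where $H_1=\dfrac{\varepsilon\sigma^2_{e_{SR_m}}(p_{SR_m}+q_{SR_m})}{p_{SR_m}-\varepsilon q_{SR_m}}$ and $H_2=\dfrac{\varepsilon\sigma^2_{e_{R_mD}}(p_{R_mD}+q_{R_mD})}{p_{R_mD}-\varepsilon q_{R_mD}}$.
   Context: Dual-hop decode-and-forward relaying from a source $S$ via a randomly chosen relay $R_m$ to a destination $D$, in the presence of transmitter/receiver I/Q imbalance and channel estimation errors; $\hat h_j$ denotes the estimated channel of link $j$ under Rayleigh fading, $\sigma^2_{e_j}$ the estimation-error variance, $\alpha$ the energy-harvesting time-allocation factor. The quantity on the left is the asymptotic (high-SNR) outage probability of random relay selection; $z^*$ denotes complex conjugate and $i$ the imaginary unit. *)

theory Defs
  imports "HOL-Probability.Probability"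
begin

definition mu_t :: "real \<Rightarrow> real \<Rightarrow> complex" where
  "mu_t xi phi = (1 + complex_of_real xi * exp (\<i> * complex_of_real phi)) / 2"
definition v_t :: "real \<Rightarrow> real \<Rightarrow> complex" where
  "v_t xi phi = (1 - complex_of_real xi * exp (- \<i> * complex_of_real phi)) / 2"
definition mu_r :: "real \<Rightarrow> real \<Rightarrow> complex" where
  "mu_r xi phi = (1 + complex_of_real xi * exp (- \<i> * complex_of_real phi)) / 2"
definition v_r :: "real \<Rightarrow> real \<Rightarrow> complex" where
  "v_r xi phi = (1 - complex_of_real xi * exp (\<i> * complex_of_real phi)) / 2"

definition iq_p :: "real \<Rightarrow> real \<Rightarrow> real \<Rightarrow> real \<Rightarrow> real" where
  "iq_p xt pt xr pr = (cmod (mu_t xt pt * mu_r xr pr + cnj (v_t xt pt) * v_r xr pr))\<^sup>2"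
definition iq_q :: "real \<Rightarrow> real \<Rightarrow> real \<Rightarrow> real \<Rightarrow> real" where
  "iq_q xt pt xr pr = (cmod (mu_r xr pr * v_t xt pt + cnj (mu_t xt pt) * v_r xr pr))\<^sup>2"

definition cap_inf :: "real \<Rightarrow> real \<Rightarrow> real \<Rightarrow> real \<Rightarrow> real \<Rightarrow> real" where
  "cap_inf \<alpha> s p q x = (1 - \<alpha>) / 2 * log 2 (1 + x * p / (s * p + x * q + s * q))"

end

theory Submission
  imports Defs
begin

lemma cap_iff:
  fixes \<alpha> Rth t p q x :: real
  assumes "0 < \<alpha>" "\<alpha> < 1" "0 < Rth" "0 < t" "0 \<le> q" "x > 0"
    and e: "e = 2 powr (2 * Rth / (1 - \<alpha>)) - 1"
    and pq: "p - e * q > 0"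
  shows "cap_inf \<alpha> t p q x < Rth \<longleftrightarrow> x < e * t * (p + q) / (p - e * q)"
proof -
  have "2 powr (2 * Rth / (1 - \<alpha>)) > 1"
    using assms by (intro gr_one_powr) auto
  hence e0: "e > 0" using e by simp
  have "e * q \<ge> 0" using e0 assms(5) by simp
  hence p0: "p > 0" using pq by linarith
  define D where "D = t * p + x * q + t * q"
  have "t * p > 0" "x * q \<ge> 0" "t * q \<ge> 0" using p0 assms by simp_all
  hence D0: "D > 0" unfolding D_def by linarith
  have S0: "x * p / D \<ge> 0" using D0 p0 assms by simp
  have "cap_inf \<alpha> t p q x < Rth \<longleftrightarrow> log 2 (1 + x * p / D) < 2 * Rth / (1 - \<alpha>)"
    unfolding cap_inf_def D_def[symmetric] using assms
    by (simp add: field_simps)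
  also have "\<dots> \<longleftrightarrow> 1 + x * p / D < 1 + e"
    using S0 e by (subst log_less_iff) auto
  also have "\<dots> \<longleftrightarrow> x * p < e * D"
    using D0 by (simp add: pos_divide_less_eq)
  also have "\<dots> \<longleftrightarrow> x * (p - e * q) < e * t * (p + q)"
    unfolding D_def by (simp add: algebra_simps)
  also have "\<dots> \<longleftrightarrow> x < e * t * (p + q) / (p - e * q)"
    using pq by (simp add: pos_less_divide_eq)
  finally show ?thesis .
qed

lemma surv_ge:
  fixes M :: "'w measure" and X :: "'w \<Rightarrow> real"
  assumes "prob_space M" "X \<in> borel_measurable M" "H > 0"
    and S: "\<And>x. x \<ge> 0 \<Longrightarrow> measure M {\<omega> \<in> space M. X \<omega> > x} = exp (- lam * x)"
  shows "measure M {\<omega> \<in> space M. X \<omega> \<ge> H} = exp (- lam * H)"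
proof -
  interpret prob_space M by fact
  define A where "A n = {\<omega> \<in> space M. X \<omega> > H - 1 / (real n + 1 / H)}" for n :: nat
  have "A n \<in> sets M" for n unfolding A_def using assms(2) by measurable
  hence meas: "range A \<subseteq> sets M" by auto
  have dec: "decseq A"
  proof (rule decseq_SucI)
    fix n
    have "1 / (real (Suc n) + 1 / H) \<le> 1 / (real n + 1 / H)"
      using assms(3) by (intro divide_left_mono) (auto intro!: mult_pos_pos add_nonneg_pos)
    thus "A (Suc n) \<subseteq> A n" unfolding A_def by auto
  qed
  have int: "(\<Inter>n. A n) = {\<omega> \<in> space M. X \<omega> \<ge> H}"
  proof (intro set_eqI iffI)
    fix w assume w: "w \<in> (\<Inter>n. A n)"
    hence sp: "w \<in> space M" unfolding A_def by auto
    have "X w \<ge> H"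
    proof (rule ccontr)
      assume "\<not> X w \<ge> H"
      hence d: "H - X w > 0" by simp
      obtain n :: nat where n: "real n > 1 / (H - X w)" using reals_Archimedean2 by blast
      have "1 / (real n + 1 / H) < H - X w"
      proof -
        have "real n + 1 / H > 1 / (H - X w)" using n assms(3) zero_less_divide_1_iff[of H] by linarith
        hence "1 / (real n + 1 / H) < 1 / (1 / (H - X w))"
          using d assms(3) by (intro divide_strict_left_mono) (auto intro!: mult_pos_pos divide_pos_pos add_nonneg_pos)
        thus ?thesis using d by simp
      qed
      moreover have "w \<in> A n" using w by auto
      ultimately show False unfolding A_def by auto
    qed
    thus "w \<in> {\<omega> \<in> space M. X \<omega> \<ge> H}" using sp by auto
  next
    fix w assume "w \<in> {\<omega> \<in> space M. X \<omega> \<ge> H}"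
    moreover have pos: "1 / (real n + 1 / H) > 0" for n using assms(3) by (simp add: add_nonneg_pos)
    ultimately show "w \<in> (\<Inter>n. A n)" unfolding A_def
    proof (intro InterI, clarsimp)
      fix n assume "w \<in> space M" "H \<le> X w"
      thus "H - 1 / (real n + 1 / H) < X w" using pos[of n] by linarith
    qed
  qed
  have lim1: "(\<lambda>n. measure M (A n)) \<longlonglongrightarrow> measure M {\<omega> \<in> space M. X \<omega> \<ge> H}"
    using finite_Lim_measure_decseq[OF meas dec] int by simp
  have le: "1 / (real n + 1 / H) \<le> H" for n
  proof -
    have "1 / (real n + 1 / H) \<le> 1 / (1 / H)"
      using assms(3) by (intro divide_left_mono) (auto intro!: mult_pos_pos divide_pos_pos add_nonneg_pos)
    thus ?thesis by simp
  qed
  have eq: "measure M (A n) = exp (- lam * (H - 1 / (real n + 1 / H)))" for n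
    unfolding A_def using le[of n] by (intro S) auto
  have "(\<lambda>n. 1 / (real n + 1 / H)) \<longlonglongrightarrow> 0"
  proof -
    have "filterlim (\<lambda>n. real n + 1 / H) at_top sequentially"
      using filterlim_tendsto_add_at_top[OF tendsto_const filterlim_real_sequentially, of "1 / H"]
      by (simp add: add.commute)
    thus ?thesis by (intro tendsto_divide_0[OF tendsto_const]) (simp add: filterlim_at_top_imp_at_infinity)
  qed
  hence "(\<lambda>n. exp (- lam * (H - 1 / (real n + 1 / H)))) \<longlonglongrightarrow> exp (- lam * (H - 0))"
    by (intro tendsto_intros)
  hence "(\<lambda>n. measure M (A n)) \<longlonglongrightarrow> exp (- lam * H)" using eq by simp
  with lim1 show ?thesis using LIMSEQ_unique by blast
qed

theorem corollary1:
  fixes M :: "'w measure" and X1 X2 :: "'w \<Rightarrow> real"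
    and \<alpha> Rth t lam1 lam2 :: real
    and xt1 pt1 xr1 pr1 xt2 pt2 xr2 pr2 :: real
  defines "\<epsilon> \<equiv> 2 powr (2 * Rth / (1 - \<alpha>)) - 1"
  defines "p1 \<equiv> iq_p xt1 pt1 xr1 pr1" and "q1 \<equiv> iq_q xt1 pt1 xr1 pr1"
  defines "p2 \<equiv> iq_p xt2 pt2 xr2 pr2" and "q2 \<equiv> iq_q xt2 pt2 xr2 pr2"
  assumes "prob_space M"
    and "0 < \<alpha>" "\<alpha> < 1" "0 < Rth"
    and "0 < xt1" "0 < xr1" "0 < xt2" "0 < xr2"
    and "p1 - \<epsilon> * q1 > 0" "p2 - \<epsilon> * q2 > 0"
    and "0 < lam1" "0 < lam2" "0 < t"
    and "X1 \<in> borel_measurable M" "X2 \<in> borel_measurable M"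
    and "prob_space.indep_var M borel X1 borel X2"
    and "\<And>x. x \<ge> 0 \<Longrightarrow> measure M {\<omega> \<in> space M. X1 \<omega> > x} = exp (- lam1 * x)"
    and "\<And>x. x \<ge> 0 \<Longrightarrow> measure M {\<omega> \<in> space M. X2 \<omega> > x} = exp (- lam2 * x)"
  shows "measure M {\<omega> \<in> space M.
           min (cap_inf \<alpha> t p1 q1 (X1 \<omega>)) (cap_inf \<alpha> t p2 q2 (X2 \<omega>)) < Rth}
         = 1 - exp (- lam1 * (\<epsilon> * t * (p1 + q1) / (p1 - \<epsilon> * q1))
                    - lam2 * (\<epsilon> * t * (p2 + q2) / (p2 - \<epsilon> * q2)))"
proof -
  interpret prob_space M by fact
  have "2 powr (2 * Rth / (1 - \<alpha>)) > 1"
    using assms by (intro gr_one_powr) auto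
  hence e0: "\<epsilon> > 0" unfolding \<epsilon>_def by simp
  have q1: "q1 \<ge> 0" and q2: "q2 \<ge> 0" unfolding q1_def q2_def iq_q_def by auto
  define H1 where "H1 = \<epsilon> * t * (p1 + q1) / (p1 - \<epsilon> * q1)"
  define H2 where "H2 = \<epsilon> * t * (p2 + q2) / (p2 - \<epsilon> * q2)"
  have "\<epsilon> * q1 \<ge> 0" "\<epsilon> * q2 \<ge> 0" using e0 q1 q2 by simp_all
  hence p1: "p1 > 0" and p2: "p2 > 0" using \<open>p1 - \<epsilon> * q1 > 0\<close> \<open>p2 - \<epsilon> * q2 > 0\<close> by linarith+
  have H1: "H1 > 0" unfolding H1_def using e0 p1 q1 \<open>p1 - \<epsilon> * q1 > 0\<close> \<open>0 < t\<close> by (intro divide_pos_pos mult_pos_pos) auto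
  have H2: "H2 > 0" unfolding H2_def using e0 p2 q2 \<open>p2 - \<epsilon> * q2 > 0\<close> \<open>0 < t\<close> by (intro divide_pos_pos mult_pos_pos) auto
  have [measurable]: "X1 \<in> borel_measurable M" "X2 \<in> borel_measurable M" by fact+
  have "prob {\<omega> \<in> space M. X1 \<omega> > 0} = 1" using \<open>\<And>x. x \<ge> 0 \<Longrightarrow> measure M {\<omega> \<in> space M. X1 \<omega> > x} = exp (- lam1 * x)\<close>[of 0] by simp
  hence AE1: "AE \<omega> in M. X1 \<omega> > 0" using AE_prob_1 by force
  have "prob {\<omega> \<in> space M. X2 \<omega> > 0} = 1" using \<open>\<And>x. x \<ge> 0 \<Longrightarrow> measure M {\<omega> \<in> space M. X2 \<omega> > x} = exp (- lam2 * x)\<close>[of 0] by simp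
  hence AE2: "AE \<omega> in M. X2 \<omega> > 0" using AE_prob_1 by force
  define E where "E = {\<omega> \<in> space M.
           min (cap_inf \<alpha> t p1 q1 (X1 \<omega>)) (cap_inf \<alpha> t p2 q2 (X2 \<omega>)) < Rth}"
  define F where "F = {\<omega> \<in> space M. X1 \<omega> < H1 \<or> X2 \<omega> < H2}"
  define G where "G = {\<omega> \<in> space M. X1 \<omega> \<ge> H1 \<and> X2 \<omega> \<ge> H2}"
  have c1m: "cap_inf \<alpha> t p1 q1 \<in> borel_measurable borel"
    unfolding cap_inf_def by measurable
  have c2m: "cap_inf \<alpha> t p2 q2 \<in> borel_measurable borel"
    unfolding cap_inf_def by measurable
  have f1: "(\<lambda>\<omega>. cap_inf \<alpha> t p1 q1 (X1 \<omega>)) \<in> borel_measurable M"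
    using measurable_compose[OF \<open>X1 \<in> borel_measurable M\<close> c1m] by (simp add: comp_def)
  have f2: "(\<lambda>\<omega>. cap_inf \<alpha> t p2 q2 (X2 \<omega>)) \<in> borel_measurable M"
    using measurable_compose[OF \<open>X2 \<in> borel_measurable M\<close> c2m] by (simp add: comp_def)
  have fm: "(\<lambda>\<omega>. min (cap_inf \<alpha> t p1 q1 (X1 \<omega>)) (cap_inf \<alpha> t p2 q2 (X2 \<omega>))) \<in> borel_measurable M"
    by (rule borel_measurable_min[OF f2 f1])
  have Em: "E \<in> sets M" unfolding E_def
    by (rule borel_measurable_less[OF fm borel_measurable_const])
  have Fm: "F \<in> sets M" unfolding F_def by measurable
  have Gm: "G \<in> sets M" unfolding G_def by measurable
  have "AE \<omega> in M. \<omega> \<in> E \<longleftrightarrow> \<omega> \<in> F"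
    using AE1 AE2
  proof eventually_elim
    case (elim \<omega>)
    have c1: "cap_inf \<alpha> t p1 q1 (X1 \<omega>) < Rth \<longleftrightarrow> X1 \<omega> < H1"
      unfolding H1_def using \<open>0 < \<alpha>\<close> \<open>\<alpha> < 1\<close> \<open>0 < Rth\<close> \<open>p1 - \<epsilon> * q1 > 0\<close> \<open>0 < t\<close> q1 elim by (intro cap_iff[OF _ _ _ _ _ _ \<epsilon>_def[THEN meta_eq_to_obj_eq]]) auto
    have c2: "cap_inf \<alpha> t p2 q2 (X2 \<omega>) < Rth \<longleftrightarrow> X2 \<omega> < H2"
      unfolding H2_def using \<open>0 < \<alpha>\<close> \<open>\<alpha> < 1\<close> \<open>0 < Rth\<close> \<open>p2 - \<epsilon> * q2 > 0\<close> \<open>0 < t\<close> q2 elim by (intro cap_iff[OF _ _ _ _ _ _ \<epsilon>_def[THEN meta_eq_to_obj_eq]]) auto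
    show ?case unfolding E_def F_def using c1 c2 by (auto simp: min_less_iff_disj)
  qed
  hence "prob E = prob F" using Em Fm by (rule measure_eq_AE)
  also have "F = space M - G" unfolding F_def G_def by auto
  also have "prob (space M - G) = 1 - prob G" using Gm by (rule prob_compl)
  also have "G = (\<lambda>x. (X1 x, X2 x)) -` ({H1..} \<times> {H2..}) \<inter> space M" unfolding G_def by auto
  also have "prob \<dots> = prob (X1 -` {H1..} \<inter> space M) * prob (X2 -` {H2..} \<inter> space M)"
    using \<open>prob_space.indep_var M borel X1 borel X2\<close> by (intro indep_varD) auto
  also have "X1 -` {H1..} \<inter> space M = {\<omega> \<in> space M. X1 \<omega> \<ge> H1}" by auto
  also have "X2 -` {H2..} \<inter> space M = {\<omega> \<in> space M. X2 \<omega> \<ge> H2}" by auto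
  also have "prob {\<omega> \<in> space M. X1 \<omega> \<ge> H1} = exp (- lam1 * H1)"
    using \<open>\<And>x. x \<ge> 0 \<Longrightarrow> measure M {\<omega> \<in> space M. X1 \<omega> > x} = exp (- lam1 * x)\<close> H1 by (intro surv_ge[OF \<open>prob_space M\<close>]) auto
  also have "prob {\<omega> \<in> space M. X2 \<omega> \<ge> H2} = exp (- lam2 * H2)"
    using \<open>\<And>x. x \<ge> 0 \<Longrightarrow> measure M {\<omega> \<in> space M. X2 \<omega> > x} = exp (- lam2 * x)\<close> H2 by (intro surv_ge[OF \<open>prob_space M\<close>]) auto
  finally have "prob E = 1 - exp (- lam1 * H1) * exp (- lam2 * H2)" .
  also have "\<dots> = 1 - exp (- lam1 * H1 - lam2 * H2)"
    by (simp add: exp_diff exp_minus field_simps)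
  finally show ?thesis unfolding E_def H1_def H2_def .
qed

end
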